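(* Let $P$ be analytic in $\{\operatorname{Re}z>0\}$ and suppose there are constants $M,a,b>0$ such that for every $\delta\in(0,\tfrac{\pi}{2})$ and every $z\in S(-\tfrac{\pi}{2}+\delta,\tfrac{\pi}{2}-\delta)$, $$|P(z)|<M\exp\!\Big(\frac{b}{\delta}\Big)e^{-a|z|}.$$ Then for every $c$ with $0<c<a$ there exist $h>0$ and $M_h>0$ such that $|P(h+iy)|<M_h e^{-c|y|}$ for all real $y$. Consequently $P\equiv0$.
   Context: For $\alpha<\beta$, $S(\alpha,\beta)=\{z\in\mathbb{C}:0<|z|<\infty,\ \alpha<\arg z<\beta\}$. *)

theory Defs
  imports "HOL-Complex_Analysis.Complex_Analysis"
begin

text \<open>The argument is the principal argument Arg (values in (-pi, pi]); the sectors used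
  here lie inside (-pi/2, pi/2), so no branch issue arises.\<close>
definition sector :: "real \<Rightarrow> real \<Rightarrow> complex set" where
  "sector \<alpha> \<beta> = {z. z \<noteq> 0 \<and> \<alpha> < Arg z \<and> Arg z < \<beta>}"

end

theory Submission
  imports Defs
begin

lemma decay:
  fixes P :: "complex \<Rightarrow> complex" and M a b :: real
  assumes a: "a > 0" and b: "b > 0"
    and bound: "\<And>\<delta> z. 0 < \<delta> \<Longrightarrow> \<delta> < pi / 2 \<Longrightarrow>
        z \<in> sector (- pi / 2 + \<delta>) (pi / 2 - \<delta>) \<Longrightarrow>
        norm (P z) < M * exp (b / \<delta>) * exp (- a * norm z)"
    and z: "Re z \<ge> 4 * b / a"
  shows "norm (P z) < M * exp (- (a/2) * norm z)"
proof -
  define h where "h = 4 * b / a"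
  have h: "h > 0" using a b by (simp add: h_def)
  have xz: "Re z > 0" using z h h_def by linarith
  hence z0: "z \<noteq> 0" by auto
  define n where "n = norm z"
  have nh: "n \<ge> h" using z complex_Re_le_cmod[of z] by (simp add: n_def h_def)
  have n0: "n > 0" using nh h by linarith
  define \<delta> where "\<delta> = h / (2 * n)"
  have d0: "\<delta> > 0" using h n0 by (simp add: \<delta>_def)
  have dle: "\<delta> \<le> 1/2" using nh n0 by (simp add: \<delta>_def field_simps)
  have dpi: "\<delta> < pi/2" using dle pi_gt3 by linarith
  have cosA: "cos (Arg z) \<ge> 2 * \<delta>"
  proof -
    have "cos (Arg z) = Re z / n" using cos_Arg[OF z0] by (simp add: n_def)
    moreover have "Re z / n \<ge> h / n" using z n0 unfolding h_def by (intro divide_right_mono) auto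
    moreover have "h / n = 2 * \<delta>" using n0 by (simp add: \<delta>_def)
    ultimately show ?thesis by simp
  qed
  have absA: "\<bar>Arg z\<bar> < pi/2"
    using Re_Ln_pos_lt_imp[OF xz] Arg_eq_Im_Ln[OF z0] by simp
  have "cos (Arg z) = cos \<bar>Arg z\<bar>" by simp
  also have "\<dots> = sin (pi/2 - \<bar>Arg z\<bar>)" by (simp add: sin_cos_eq)
  also have "\<dots> \<le> pi/2 - \<bar>Arg z\<bar>" using absA by (intro sin_x_le_x) simp
  finally have "\<bar>Arg z\<bar> < pi/2 - \<delta>" using cosA d0 by linarith
  hence sec: "z \<in> sector (- pi / 2 + \<delta>) (pi / 2 - \<delta>)"
    using z0 by (auto simp: sector_def)
  have bd: "b / \<delta> = a * n / 2" using a b n0 by (simp add: \<delta>_def h_def field_simps)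
  have "norm (P z) < M * exp (b / \<delta>) * exp (- a * norm z)" by (rule bound[OF d0 dpi sec])
  also have "\<dots> = M * exp (- (a/2) * norm z)"
    by (simp add: bd n_def mult.assoc flip: exp_add)
  finally show ?thesis .
qed

lemma zero_right:
  fixes Q :: "complex \<Rightarrow> complex" and M c h :: real
  assumes hol: "Q holomorphic_on {z. Re z > 0}"
    and h: "h > 0" and c: "c > 0"
    and dec: "\<And>z. Re z \<ge> h \<Longrightarrow> norm (Q z) \<le> M * exp (- c * norm z)"
    and z0: "Re z0 > h"
  shows "Q z0 = 0"
proof -
  define l where "l = 2 * c / pi"
  have l: "l > 0" using c by (simp add: l_def)
  define x0 where "x0 = Re z0"
  define r0 where "r0 = norm z0"
  define t0 where "t0 = Im (Ln z0)"
  define A where "A = M * exp (- l * h * ln h + l * x0 * ln r0 - l * Im z0 * t0)"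
  have key: "norm (Q z0) \<le> A * exp (- l * (x0 - h) * L)" if L: "L \<ge> ln h" for L
  proof -
    define F where "F = (\<lambda>z. Q z * exp (- of_real l * z * (Ln z - of_real L)))"
    have normF: "norm (F z) = norm (Q z) * exp (- l * (Re z * (ln (norm z) - L) - Im z * Im (Ln z)))"
      if "z \<noteq> 0" for z
      using that by (simp add: F_def norm_mult algebra_simps)
    have Fb: "norm (F z) \<le> M * exp (l * Re z * (L - ln (norm z)))" if "Re z \<ge> h" for z
    proof -
      have zp: "Re z > 0" using that h by linarith
      hence zn: "z \<noteq> 0" by auto
      have "\<bar>Im (Ln z)\<bar> < pi/2" using Re_Ln_pos_lt_imp[OF zp] .
      hence "Im z * Im (Ln z) \<le> \<bar>Im z\<bar> * (pi/2)"
        by (metis abs_ge_self abs_ge_zero abs_mult less_eq_real_def mult_left_mono order_trans)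
      also have "\<dots> \<le> norm z * (pi/2)" using abs_Im_le_cmod[of z] by (intro mult_right_mono) auto
      finally have "l * (Im z * Im (Ln z)) \<le> l * (norm z * (pi/2))" using l by (intro mult_left_mono) auto
      also have "\<dots> = c * norm z" by (simp add: l_def)
      finally have imb: "l * (Im z * Im (Ln z)) \<le> c * norm z" .
      have "norm (F z) = norm (Q z) * exp (- l * (Re z * (ln (norm z) - L) - Im z * Im (Ln z)))"
        using normF[OF zn] .
      also have "\<dots> \<le> M * exp (- c * norm z) * exp (- l * (Re z * (ln (norm z) - L) - Im z * Im (Ln z)))"
        using dec[OF that] by (intro mult_right_mono) auto
      also have "\<dots> = M * exp (- c * norm z - l * (Re z * (ln (norm z) - L) - Im z * Im (Ln z)))"
        by (simp add: mult.assoc flip: exp_add)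
      also have "\<dots> \<le> M * exp (l * Re z * (L - ln (norm z)))"
      proof -
        have M0: "M \<ge> 0" using dec[OF that] by (smt (verit) exp_gt_zero mult_nonneg_nonneg norm_ge_zero zero_le_mult_iff)
        show ?thesis using imb M0 by (intro mult_left_mono) (auto simp: algebra_simps)
      qed
      finally show ?thesis .
    qed
    have M0: "M \<ge> 0" using dec[of h] by (smt (verit) exp_gt_zero norm_ge_zero zero_le_mult_iff Re_complex_of_real)
    define R where "R = max (r0 + 1) (exp L)"
    define S where "S = {z. h \<le> Re z \<and> norm z \<le> R}"
    define K where "K = M * exp (l * h * (L - ln h))"
    have holF: "F holomorphic_on {z. Re z > 0}"
    proof -
      have "Ln holomorphic_on {z. Re z > 0}"
        by (rule holomorphic_on_Ln) (auto simp: complex_nonpos_Reals_iff)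
      thus ?thesis unfolding F_def using hol by (intro holomorphic_intros) (auto simp: complex_nonpos_Reals_iff)
    qed
    have Ssub: "S \<subseteq> {z. Re z > 0}" using h by (auto simp: S_def)
    have clS: "closed S" unfolding S_def
      by (intro closed_Collect_conj closed_Collect_le continuous_intros)
    have boS: "bounded S" unfolding S_def bounded_iff by auto
    have "norm (F z0) \<le> K"
    proof (rule maximum_modulus_frontier[of F S])
      show "F holomorphic_on interior S" using holF Ssub interior_subset
        by (meson holomorphic_on_subset order_trans)
      show "continuous_on (closure S) F" using clS Ssub holF
        by (metis closure_closed holomorphic_on_imp_continuous_on holomorphic_on_subset)
      show "bounded S" by fact
      show "z0 \<in> S" using z0 by (auto simp: S_def R_def r0_def)
    next
      fix z assume zf: "z \<in> frontier S"
      hence zS: "z \<in> S" using clS frontier_subset_closed by blast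
      have "Re z = h \<or> norm z = R"
      proof (rule ccontr)
        assume "\<not> ?thesis"
        hence "z \<in> {z. h < Re z} \<inter> {z. norm z < R}" using zS by (auto simp: S_def)
        moreover have "open ({z. h < Re z} \<inter> {z. norm z < R})"
          by (intro open_Int open_halfspace_Re_gt) (intro open_Collect_less continuous_intros)
        moreover have "{z. h < Re z} \<inter> {z. norm z < R} \<subseteq> S" by (auto simp: S_def)
        ultimately have "z \<in> interior S" by (meson interior_maximal subsetD)
        thus False using zf by (simp add: frontier_def)
      qed
      thus "norm (F z) \<le> K"
      proof
        assume e: "Re z = h"
        have "ln h \<le> ln (norm z)" using e h complex_Re_le_cmod[of z] by (intro ln_mono) auto
        hence "l * Re z * (L - ln (norm z)) \<le> l * h * (L - ln h)" using e l h
          by (simp add: mult_left_mono)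
        thus ?thesis using Fb[of z] e M0 unfolding K_def
          by (smt (verit) exp_le_cancel_iff mult_left_mono)
      next
        assume e: "norm z = R"
        have "L \<le> ln R" unfolding R_def by (smt (verit) ln_exp ln_le_cancel_iff exp_gt_zero)
        hence "l * Re z * (L - ln (norm z)) \<le> 0" using e l zS h
          by (intro mult_nonneg_nonpos) (auto simp: S_def)
        moreover have "0 \<le> l * h * (L - ln h)" using l h L by auto
        ultimately show ?thesis using Fb[of z] zS M0 unfolding K_def S_def
          by (smt (verit) exp_le_cancel_iff mult_left_mono mem_Collect_eq)
      qed
    qed
    moreover have "norm (F z0) = norm (Q z0) * exp (- l * (x0 * (ln r0 - L) - Im z0 * t0))"
    proof -
      have "z0 \<noteq> 0" using z0 h by auto
      thus ?thesis using normF[of z0] by (simp add: x0_def r0_def t0_def)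
    qed
    ultimately have "norm (Q z0) \<le> K / exp (- l * (x0 * (ln r0 - L) - Im z0 * t0))"
      by (simp add: pos_le_divide_eq)
    also have "\<dots> = A * exp (- l * (x0 - h) * L)"
      unfolding K_def A_def by (simp add: exp_diff exp_minus algebra_simps flip: exp_add)
    finally show ?thesis .
  qed
  show ?thesis
  proof (rule ccontr)
    assume "Q z0 \<noteq> 0"
    hence q: "norm (Q z0) > 0" by simp
    have xh: "x0 - h > 0" using z0 by (simp add: x0_def)
    show False
    proof (cases "A > 0")
      case False
      have "norm (Q z0) \<le> A * exp (- l * (x0 - h) * ln h)" using key[of "ln h"] by simp
      also have "\<dots> \<le> 0" using False by (simp add: mult_nonpos_nonneg)
      finally show False using q by simp
    next
      case True
      define L where "L = max (ln h) ((ln A - ln (norm (Q z0))) / (l * (x0 - h)) + 1)"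
      have "(ln A - ln (norm (Q z0))) / (l * (x0 - h)) < L" unfolding L_def by linarith
      hence "ln A - ln (norm (Q z0)) < l * (x0 - h) * L" using l xh
        by (simp add: pos_divide_less_eq mult.commute)
      hence "exp (- l * (x0 - h) * L) < exp (ln (norm (Q z0)) - ln A)" by simp
      also have "\<dots> = norm (Q z0) / A" using q True by (simp add: exp_diff)
      finally have "A * exp (- l * (x0 - h) * L) < norm (Q z0)" using True
        by (simp add: pos_less_divide_eq mult.commute)
      moreover have "norm (Q z0) \<le> A * exp (- l * (x0 - h) * L)" using key[of L] by (simp add: L_def)
      ultimately show False by simp
    qed
  qed
qed
theorem mainTheorem8:
  fixes P :: "complex \<Rightarrow> complex" and M a b :: real
  assumes hol: "P holomorphic_on {z. Re z > 0}"
    and M: "M > 0" and a: "a > 0" and b: "b > 0"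
    and bound: "\<And>\<delta> z. 0 < \<delta> \<Longrightarrow> \<delta> < pi / 2 \<Longrightarrow>
        z \<in> sector (- pi / 2 + \<delta>) (pi / 2 - \<delta>) \<Longrightarrow>
        norm (P z) < M * exp (b / \<delta>) * exp (- a * norm z)"
  shows "(\<forall>c. 0 < c \<and> c < a \<longrightarrow>
            (\<exists>h Mh. h > 0 \<and> Mh > 0 \<and>
               (\<forall>y::real. norm (P (complex_of_real h + \<i> * complex_of_real y))
                            < Mh * exp (- c * \<bar>y\<bar>))))
         \<and> (\<forall>z. Re z > 0 \<longrightarrow> P z = 0)"
proof -
  have z: "P z = 0" if "Re z > 0" for z
  proof (rule analytic_continuation_open[where f = P and g = "\<lambda>_. 0"])
    show "open {z. Re z > 4 * b / a}" by (rule open_halfspace_Re_gt)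
    show "open {z. Re z > 0}" by (rule open_halfspace_Re_gt)
    show "{z. Re z > 4 * b / a} \<noteq> {}"
      by (rule ccontr) (auto dest!: equalityD1 simp: subset_iff dest: spec[of _ "of_real (4 * b / a + 1)"])
    show "connected {z. Re z > 0}" by (intro convex_connected convex_halfspace_Re_gt)
    show "{z. Re z > 4 * b / a} \<subseteq> {z. Re z > 0}" using a b
      by (auto intro: less_trans[rotated] simp: )
    show "P holomorphic_on {z. Re z > 0}" by fact
    show "(\<lambda>_. 0) holomorphic_on {z. Re z > 0}" by simp
    show "z \<in> {z. Re z > 0}" using that by simp
  next
    fix w assume w: "w \<in> {z. Re z > 4 * b / a}"
    show "P w = 0"
    proof (rule zero_right[where Q = P and M = M and c = "a/2" and h = "4 * b / a"])
      show "P holomorphic_on {z. Re z > 0}" by fact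
      show "4 * b / a > 0" using a b by simp
      show "a / 2 > 0" using a by simp
      show "Re w > 4 * b / a" using w by simp
      fix z assume "Re z \<ge> 4 * b / a"
      thus "norm (P z) \<le> M * exp (- (a/2) * norm z)"
        using decay[OF a b bound] by (meson less_imp_le)
    qed
  qed
  show ?thesis
  proof
    show "\<forall>z. Re z > 0 \<longrightarrow> P z = 0" using z by blast
    show "\<forall>c. 0 < c \<and> c < a \<longrightarrow>
            (\<exists>h Mh. h > 0 \<and> Mh > 0 \<and>
               (\<forall>y::real. norm (P (complex_of_real h + \<i> * complex_of_real y))
                            < Mh * exp (- c * \<bar>y\<bar>)))"
    proof (intro allI impI exI[of _ 1] conjI)
      fix c y show "norm (P (complex_of_real 1 + \<i> * complex_of_real y)) < 1 * exp (- c * \<bar>y\<bar>)"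
        using z[of "complex_of_real 1 + \<i> * complex_of_real y"] by simp
    qed auto
  qed
qed

end
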